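(* Let $n\ge 2$ and $d\ge 1$ be integers and let $\mathbf{B}=(B_1,\dots,B_d)\in M_n(\mathbb{C})^d$ be a bistochastic tuple. Let $p\geq q\geq 1$. Then \begin{enumerate} \item $h_{S_p}(\mathbf{B})\leq d^{\frac{p-q}{2}}\, h_{S_q}(\mathbf{B})$, and \item $h_{S_p}(\mathbf{B})\geq \big[h_{S_q}(\mathbf{B})\big]^{p/q}$. \end{enumerate} In particular, for every $p,q\in[1,\infty)$ the notions $h_{S_p}$ and $h_{S_q}$ are equivalent: for every $d$ and every sequence $(\mathbf{B}_m)_m$ of bistochastic $d$-tuples (with $\mathbf{B}_m\in M_{n_m}(\mathbb{C})^d$), one has $\inf_m h_{S_p}(\mathbf{B}_m)>0$ if and only if $\inf_m h_{S_q}(\mathbf{B}_m)>0$.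
   Context: A tuple $\mathbf{B}=(B_1,\dots,B_d)\in M_n(\mathbb{C})^d$ is called bistochastic if $\sum_{i=1}^d B_i^*B_i=\sum_{i=1}^d B_iB_i^*=d\cdot \mathrm{Id}$. For a subspace $V$ of $\mathbb{C}^n$ let $P_V$ denote the orthogonal projector onto $V$, and write $B_i|_{V^\perp,V}=P_V B_i(\mathrm{Id}-P_V)$. For $p\in[1,\infty)$, $\|X\|_{S_p}$ denotes the Schatten-$p$ norm of a matrix $X$ (the $\ell_p$ norm of its singular values). The $S_p$ edge expansion of a bistochastic tuple is $$h_{S_p}(\mathbf{B})=\min_{\substack{V \text{ nonzero subspace of } \mathbb{C}^n,\ \dim V\leq n/2}} \frac{\sum_{i=1}^{d}\|B_i|_{V^\perp,V}\|_{S_p}^p}{d\,\dim V}.$$ *)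

theory Defs
  imports "Jordan_Normal_Form.Schur_Decomposition" "Jordan_Normal_Form.DL_Rank"
begin

(* Singular values of X (with multiplicity) are the square roots of the eigenvalues
   of X^* X counted with algebraic multiplicity, i.e. the roots of the characteristic
   polynomial of X^* X with their orders. *)
definition schatten_norm :: "real \<Rightarrow> complex mat \<Rightarrow> real" where
  "schatten_norm p X =
     (let f = char_poly (mat_adjoint X * X)
      in (\<Sum>z \<in> {z. poly f z = 0}. real (order z f) * (sqrt (Re z)) powr p) powr (1 / p))"

definition bistochastic :: "nat \<Rightarrow> nat \<Rightarrow> (nat \<Rightarrow> complex mat) \<Rightarrow> bool" where
  "bistochastic n d B \<longleftrightarrow>
     (\<forall>i<d. B i \<in> carrier_mat n n) \<and>
     (\<forall>j<n. \<forall>k<n. (\<Sum>i<d. (mat_adjoint (B i) * B i) $$ (j, k)) = (if j = k then of_nat d else 0)) \<and>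
     (\<forall>j<n. \<forall>k<n. (\<Sum>i<d. (B i * mat_adjoint (B i)) $$ (j, k)) = (if j = k then of_nat d else 0))"

definition orth_proj :: "nat \<Rightarrow> complex mat \<Rightarrow> bool" where
  "orth_proj n P \<longleftrightarrow> P \<in> carrier_mat n n \<and> P * P = P \<and> mat_adjoint P = P"

definition proj_dim :: "nat \<Rightarrow> complex mat \<Rightarrow> nat" where
  "proj_dim n P = vec_space.rank n P"

(* S_p edge expansion; subspaces V are represented by their orthogonal projectors P_V,
   and B_i|_{V^perp,V} = P_V B_i (Id - P_V) *)
definition edge_expansion :: "real \<Rightarrow> nat \<Rightarrow> nat \<Rightarrow> (nat \<Rightarrow> complex mat) \<Rightarrow> real" where
  "edge_expansion p n d B =
     Inf {(\<Sum>i<d. schatten_norm p (P * B i * (1\<^sub>m n - P)) powr p) / (real d * real (proj_dim n P)) | P.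
            orth_proj n P \<and> proj_dim n P \<noteq> 0 \<and> 2 * proj_dim n P \<le> n}"

end

theory Submission
  imports Defs "Jordan_Normal_Form.Jordan_Normal_Form_Uniqueness" "Jordan_Normal_Form.Jordan_Normal_Form_Existence"
begin

lemma adj_carrier: "A \<in> carrier_mat r c \<Longrightarrow> mat_adjoint A \<in> carrier_mat c r"
  unfolding mat_adjoint_def by (auto simp: mat_of_rows_def)

lemma adj_entry: "A \<in> carrier_mat r c \<Longrightarrow> i < c \<Longrightarrow> j < r \<Longrightarrow> mat_adjoint A $$ (i,j) = cnj (A $$ (j,i))"
  unfolding mat_adjoint_def by (auto simp: mat_of_rows_def)

lemma adjoint_sprod:
  fixes A :: "complex mat"
  assumes A: "A \<in> carrier_mat r c" and u: "u \<in> carrier_vec c" and w: "w \<in> carrier_vec r"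
  shows "(A *\<^sub>v u) \<bullet>c w = u \<bullet>c (mat_adjoint A *\<^sub>v w)"
proof -
  have "(A *\<^sub>v u) \<bullet>c w = (\<Sum>i<r. (\<Sum>k<c. A $$ (i,k) * u $ k) * cnj (w $ i))"
    using A u w by (simp add: scalar_prod_def mult_mat_vec_def lessThan_atLeast0)
  also have "\<dots> = (\<Sum>i<r. \<Sum>k<c. A $$ (i,k) * u $ k * cnj (w $ i))"
    by (simp add: sum_distrib_right)
  also have "\<dots> = (\<Sum>k<c. \<Sum>i<r. A $$ (i,k) * u $ k * cnj (w $ i))"
    by (rule sum.swap)
  also have "\<dots> = (\<Sum>k<c. u $ k * cnj (\<Sum>i<r. cnj (A $$ (i,k)) * w $ i))"
    by (simp add: sum_distrib_left mult_ac)
  also have "\<dots> = u \<bullet>c (mat_adjoint A *\<^sub>v w)"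
    using A u w adj_carrier[OF A] by (simp add: scalar_prod_def mult_mat_vec_def lessThan_atLeast0 adj_entry[OF A] row_def)
  finally show ?thesis .
qed

lemma cscalar_smult_right:
  fixes v w :: "complex vec"
  assumes "v \<in> carrier_vec n" "w \<in> carrier_vec n"
  shows "v \<bullet>c (e \<cdot>\<^sub>v w) = cnj e * (v \<bullet>c w)"
  using assms by (simp add: scalar_prod_def sum_distrib_left mult_ac)

lemma cscalar_self_real:
  fixes v :: "complex vec"
  shows "v \<bullet>c v = complex_of_real (Re (v \<bullet>c v))" "Re (v \<bullet>c v) \<ge> 0"
proof -
  have "v \<bullet>c v \<ge> 0" by (rule conjugate_square_ge_0_vec)
  then show "v \<bullet>c v = complex_of_real (Re (v \<bullet>c v))" "Re (v \<bullet>c v) \<ge> 0"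
    by (auto simp: less_eq_complex_def complex_eq_iff)
qed

lemma proj_split:
  fixes P :: "complex mat"
  assumes P: "P \<in> carrier_mat n n" and PP: "P * P = P" and PA: "mat_adjoint P = P" and u: "u \<in> carrier_vec n"
  shows "u \<bullet>c u = (P *\<^sub>v u) \<bullet>c (P *\<^sub>v u) + ((1\<^sub>m n - P) *\<^sub>v u) \<bullet>c ((1\<^sub>m n - P) *\<^sub>v u)"
proof -
  define a where "a = P *\<^sub>v u"
  define b where "b = (1\<^sub>m n - P) *\<^sub>v u"
  have IP: "1\<^sub>m n - P \<in> carrier_mat n n" using P by (intro minus_carrier_mat one_carrier_mat)
  have a: "a \<in> carrier_vec n" and b: "b \<in> carrier_vec n" using P u IP unfolding a_def b_def by (auto intro!: mult_mat_vec_carrier)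
  have bu: "b = u - a" unfolding a_def b_def using minus_mult_distrib_mat_vec[of "1\<^sub>m n" n n P u] P u by simp
  have ub: "u = a + b" unfolding bu using a u by (intro eq_vecI) auto
  have Pb: "P *\<^sub>v b = 0\<^sub>v n"
  proof -
    have "P *\<^sub>v b = (P * (1\<^sub>m n - P)) *\<^sub>v u" unfolding b_def using assoc_mult_mat_vec[OF P IP u] by simp
    also have "P * (1\<^sub>m n - P) = P - P * P" using mult_minus_distrib_mat[OF P one_carrier_mat P] P by simp
    also have "\<dots> = 0\<^sub>m n n" using PP P by simp
    also have "0\<^sub>m n n *\<^sub>v u = 0\<^sub>v n" using u by (intro eq_vecI) (auto simp: scalar_prod_def)
    finally show ?thesis .
  qed
  have ab: "a \<bullet>c b = 0"
  proof -
    have "a \<bullet>c b = u \<bullet>c (mat_adjoint P *\<^sub>v b)" unfolding a_def by (rule adjoint_sprod[OF P u b])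
    then show ?thesis using PA Pb u by simp
  qed
  have ba: "b \<bullet>c a = 0"
  proof -
    have "b \<bullet>c a = conjugate (a \<bullet>c b)"
      using a b by (metis conjugate_conjugate_sprod conjugate_vec_sprod_comm conjugate_id)
    then show ?thesis using ab by simp
  qed
  have "u \<bullet>c u = (a + b) \<bullet> (conjugate a + conjugate b)" using ub a b by (simp add: conjugate_add_vec)
  also have "\<dots> = a \<bullet>c a + a \<bullet>c b + (b \<bullet>c a + b \<bullet>c b)"
    using a b by (simp add: add_scalar_prod_distrib scalar_prod_add_distrib)
  finally show ?thesis using ab ba unfolding a_def b_def by simp
qed

lemma cscalar_mat_expand:
  fixes C :: "complex mat"
  assumes C: "C \<in> carrier_mat n n" and w: "w \<in> carrier_vec n"
  shows "w \<bullet>c (C *\<^sub>v w) = (\<Sum>j<n. w $ j * cnj (\<Sum>k<n. C $$ (j,k) * w $ k))"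
  using C w by (simp add: scalar_prod_def mult_mat_vec_def lessThan_atLeast0 row_def)

lemma bisto_sum:
  assumes bs: "bistochastic n d B" and w: "w \<in> carrier_vec n"
  shows "(\<Sum>i<d. (B i *\<^sub>v w) \<bullet>c (B i *\<^sub>v w)) = of_nat d * (w \<bullet>c w)"
proof -
  have Bc: "\<And>i. i < d \<Longrightarrow> B i \<in> carrier_mat n n" using bs unfolding bistochastic_def by auto
  have S: "\<And>j k. j < n \<Longrightarrow> k < n \<Longrightarrow> (\<Sum>i<d. (mat_adjoint (B i) * B i) $$ (j, k)) = (if j = k then of_nat d else 0)"
    using bs unfolding bistochastic_def by auto
  define C where "C i = mat_adjoint (B i) * B i" for i
  have Cc: "\<And>i. i < d \<Longrightarrow> C i \<in> carrier_mat n n" unfolding C_def using Bc adj_carrier by (meson mult_carrier_mat)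
  have "(\<Sum>i<d. (B i *\<^sub>v w) \<bullet>c (B i *\<^sub>v w)) = (\<Sum>i<d. w \<bullet>c (C i *\<^sub>v w))"
  proof (rule sum.cong[OF refl])
    fix i assume "i \<in> {..<d}"
    then have Bi: "B i \<in> carrier_mat n n" using Bc by auto
    have "(B i *\<^sub>v w) \<bullet>c (B i *\<^sub>v w) = w \<bullet>c (mat_adjoint (B i) *\<^sub>v (B i *\<^sub>v w))"
      by (rule adjoint_sprod[OF Bi w], use Bi w in auto)
    also have "\<dots> = w \<bullet>c (C i *\<^sub>v w)" unfolding C_def
      using assoc_mult_mat_vec[OF adj_carrier[OF Bi] Bi w] by simp
    finally show "(B i *\<^sub>v w) \<bullet>c (B i *\<^sub>v w) = w \<bullet>c (C i *\<^sub>v w)" .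
  qed
  also have "\<dots> = (\<Sum>i<d. \<Sum>j<n. w $ j * cnj (\<Sum>k<n. C i $$ (j,k) * w $ k))"
    using cscalar_mat_expand[OF Cc w] by simp
  also have "\<dots> = (\<Sum>j<n. \<Sum>i<d. w $ j * cnj (\<Sum>k<n. C i $$ (j,k) * w $ k))"
    by (rule sum.swap)
  also have "\<dots> = (\<Sum>j<n. w $ j * cnj (\<Sum>k<n. (\<Sum>i<d. C i $$ (j,k)) * w $ k))"
  proof (rule sum.cong[OF refl])
    fix j assume "j \<in> {..<n}"
    have "(\<Sum>i<d. w $ j * cnj (\<Sum>k<n. C i $$ (j,k) * w $ k)) = w $ j * cnj (\<Sum>i<d. \<Sum>k<n. C i $$ (j,k) * w $ k)"
      by (simp add: sum_distrib_left)
    also have "(\<Sum>i<d. \<Sum>k<n. C i $$ (j,k) * w $ k) = (\<Sum>k<n. \<Sum>i<d. C i $$ (j,k) * w $ k)" by (rule sum.swap)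
    also have "\<dots> = (\<Sum>k<n. (\<Sum>i<d. C i $$ (j,k)) * w $ k)" by (simp add: sum_distrib_right)
    finally show "(\<Sum>i<d. w $ j * cnj (\<Sum>k<n. C i $$ (j,k) * w $ k)) = w $ j * cnj (\<Sum>k<n. (\<Sum>i<d. C i $$ (j,k)) * w $ k)" .
  qed
  also have "\<dots> = (\<Sum>j<n. w $ j * cnj (of_nat d * w $ j))"
  proof (rule sum.cong[OF refl])
    fix j assume j: "j \<in> {..<n}"
    have "(\<Sum>k<n. (\<Sum>i<d. C i $$ (j,k)) * w $ k) = (\<Sum>k<n. (if j = k then of_nat d else 0) * w $ k)"
      using S j unfolding C_def by (intro sum.cong) auto
    also have "\<dots> = of_nat d * w $ j" proof -
      have "(\<Sum>k<n. (if j = k then of_nat d else 0) * w $ k) = (\<Sum>k<n. if k = j then of_nat d * w $ j else 0)"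
        by (intro sum.cong) auto
      then show ?thesis using j by simp
    qed
    finally show "w $ j * cnj (\<Sum>k<n. (\<Sum>i<d. C i $$ (j,k)) * w $ k) = w $ j * cnj (of_nat d * w $ j)" by simp
  qed
  also have "\<dots> = of_nat d * (w \<bullet>c w)"
    using w by (simp add: scalar_prod_def lessThan_atLeast0 sum_distrib_left mult_ac)
  finally show ?thesis .
qed

lemma eig_bound:
  fixes P :: "complex mat"
  assumes bs: "bistochastic n d B" and i: "i < d" and op: "orth_proj n P"
    and root: "poly (char_poly (mat_adjoint (P * B i * (1\<^sub>m n - P)) * (P * B i * (1\<^sub>m n - P)))) e = 0"
  shows "e = complex_of_real (Re e) \<and> 0 \<le> Re e \<and> Re e \<le> real d"
proof -
  define X where "X = P * B i * (1\<^sub>m n - P)"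
  have P: "P \<in> carrier_mat n n" and PP: "P * P = P" and PA: "mat_adjoint P = P" using op unfolding orth_proj_def by auto
  have Bi: "B i \<in> carrier_mat n n" using bs i unfolding bistochastic_def by auto
  have IP: "1\<^sub>m n - P \<in> carrier_mat n n" using P by (intro minus_carrier_mat one_carrier_mat)
  have PB: "P * B i \<in> carrier_mat n n" using P Bi by simp
  have X: "X \<in> carrier_mat n n" unfolding X_def using PB IP by simp
  have XA: "mat_adjoint X \<in> carrier_mat n n" using adj_carrier[OF X] .
  have M: "mat_adjoint X * X \<in> carrier_mat n n" using XA X by simp
  have "eigenvalue (mat_adjoint X * X) e" using eigenvalue_root_char_poly[OF M] root unfolding X_def by simp
  then obtain v where v: "v \<in> carrier_vec n" and v0: "v \<noteq> 0\<^sub>v n" and ev: "(mat_adjoint X * X) *\<^sub>v v = e \<cdot>\<^sub>v v"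
    unfolding eigenvalue_def eigenvector_def using M by auto
  define w where "w = (1\<^sub>m n - P) *\<^sub>v v"
  define y where "y = B i *\<^sub>v w"
  have w: "w \<in> carrier_vec n" unfolding w_def using IP v by simp
  have y: "y \<in> carrier_vec n" unfolding y_def using Bi w by simp
  have Xv: "X *\<^sub>v v = P *\<^sub>v y" unfolding X_def y_def w_def
    using assoc_mult_mat_vec[OF PB IP v] assoc_mult_mat_vec[OF P Bi, of "(1\<^sub>m n - P) *\<^sub>v v"] IP v by simp
  have "(X *\<^sub>v v) \<bullet>c (X *\<^sub>v v) = v \<bullet>c (mat_adjoint X *\<^sub>v (X *\<^sub>v v))"
    by (rule adjoint_sprod[OF X v], use X v in simp)
  also have "\<dots> = v \<bullet>c (e \<cdot>\<^sub>v v)" using assoc_mult_mat_vec[OF XA X v] ev by simp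
  also have "\<dots> = cnj e * (v \<bullet>c v)" by (rule cscalar_smult_right[OF v v])
  finally have eq: "(P *\<^sub>v y) \<bullet>c (P *\<^sub>v y) = cnj e * (v \<bullet>c v)" unfolding Xv .
  define r where "r = Re (v \<bullet>c v)"
  define c where "c = Re ((P *\<^sub>v y) \<bullet>c (P *\<^sub>v y))"
  have r0: "r > 0"
  proof -
    have "v \<bullet>c v > 0" using conjugate_square_greater_0_vec[OF v] v0 by simp
    then show ?thesis unfolding r_def by (simp add: less_complex_def)
  qed
  have c0: "c \<ge> 0" unfolding c_def by (rule cscalar_self_real)
  have c1: "c \<le> Re (y \<bullet>c y)"
    using proj_split[OF P PP PA y] cscalar_self_real(2)[of "(1\<^sub>m n - P) *\<^sub>v y"] unfolding c_def
    by (metis le_add_same_cancel1 plus_complex.sel(1))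
  have c2: "Re (y \<bullet>c y) \<le> real d * Re (w \<bullet>c w)"
  proof -
    have "Re (y \<bullet>c y) \<le> (\<Sum>i'<d. Re ((B i' *\<^sub>v w) \<bullet>c (B i' *\<^sub>v w)))"
      unfolding y_def using i by (intro member_le_sum) (auto intro: cscalar_self_real(2))
    also have "\<dots> = Re (\<Sum>i'<d. (B i' *\<^sub>v w) \<bullet>c (B i' *\<^sub>v w))" by simp
    also have "\<dots> = real d * Re (w \<bullet>c w)" unfolding bisto_sum[OF bs w] by simp
    finally show ?thesis .
  qed
  have c3: "Re (w \<bullet>c w) \<le> r"
    using proj_split[OF P PP PA v] cscalar_self_real(2)[of "P *\<^sub>v v"] unfolding r_def w_def
    by (metis le_add_same_cancel2 plus_complex.sel(1))
  have cd: "c \<le> real d * r" using c1 c2 c3 by (meson order_trans mult_left_mono of_nat_0_le_iff)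
  have "complex_of_real c = cnj e * complex_of_real r"
    using eq cscalar_self_real(1)[of v] cscalar_self_real(1)[of "P *\<^sub>v y"] unfolding c_def r_def by metis
  then have "cnj e = complex_of_real (c / r)" using r0 by (simp add: field_simps)
  then have ee: "e = complex_of_real (c / r)" by (metis complex_cnj_complex_of_real complex_cnj_cnj)
  have "c / r \<le> real d" using cd r0 by (simp add: divide_le_eq mult.commute)
  then show ?thesis using ee c0 r0 by simp
qed

lemma rank_nullity_mat:
  fixes A :: "'a::field mat"
  assumes A: "A \<in> carrier_mat n n"
  shows "kernel_dim A + vec_space.rank n A = n"
proof -
  interpret V: vec_space "TYPE('a)" n .
  interpret K: kernel n n A by (unfold_locales, rule A)
  interpret L: linear_map class_ring "module_vec TYPE('a) n" "module_vec TYPE('a) n" "\<lambda>v. A *\<^sub>v v"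
    apply unfold_locales
    unfolding LinearCombinations.module_hom_def using A apply (auto simp: module_vec_simps mult_add_distrib_mat_vec mult_mat_vec)
    done
  have ker: "L.kerT = mat_kernel A"
    using A by (auto simp: mod_hom.ker_def[OF L.mod_hom_axioms] mat_kernel_def module_vec_simps)
  have im: "L.imT = V.col_space A"
    using A V.col_space_eq[OF A] by (auto simp: mod_hom.im_def[OF L.mod_hom_axioms] module_vec_simps)
  from L.rank_nullity[OF V.fin_dim]
  have "vectorspace.dim class_ring (V.vs (V.col_space A)) + vectorspace.dim class_ring (V.vs (mat_kernel A)) = n"
    unfolding ker im V.dim_is_n .
  then show ?thesis unfolding kernel_dim_def V.rank_def V.col_space_def using A by simp
qed
lemma rank_mult_le:
  fixes P C :: "'a::field mat"
  assumes P: "P \<in> carrier_mat n n" and C: "C \<in> carrier_mat n n"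
  shows "vec_space.rank n (P * C) \<le> vec_space.rank n P"
proof -
  interpret V: vec_space "TYPE('a)" n .
  have PC: "P * C \<in> carrier_mat n n" using P C by auto
  have sub: "V.col_space (P*C) \<subseteq> V.col_space P"
  proof
    fix y assume "y \<in> V.col_space (P*C)"
    then obtain x where x: "x \<in> carrier_vec n" and y: "y = (P*C) *\<^sub>v x" and yc: "y \<in> carrier_vec n"
      using V.col_space_eq[OF PC] PC by auto
    have "y = P *\<^sub>v (C *\<^sub>v x)" using y assoc_mult_mat_vec[OF P C x] by simp
    moreover have "C *\<^sub>v x \<in> carrier_vec n" using C x by simp
    ultimately show "y \<in> V.col_space P" using V.col_space_eq[OF P] P yc by auto
  qed
  have colsP: "set (cols P) \<subseteq> carrier_vec n" using P by (auto simp: cols_def module_vec_simps)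
  have colsPC: "set (cols (P*C)) \<subseteq> carrier_vec n" using PC by (auto simp: cols_def module_vec_simps intro!: carrier_vecI)
  have s1: "VectorSpace.subspace class_ring (V.col_space P) V.V"
    unfolding V.col_space_def by (rule V.span_is_subspace[OF colsP])
  have s2: "VectorSpace.subspace class_ring (V.col_space (P*C)) V.V"
    unfolding V.col_space_def by (rule V.span_is_subspace[OF colsPC])
  interpret W: vectorspace class_ring "V.vs (V.col_space P)"
    by (rule V.subspace_is_vs[OF s1])
  have s3: "VectorSpace.subspace class_ring (V.col_space (P*C)) (V.vs (V.col_space P))"
    by (rule V.nested_subspaces[OF s1 s2 sub])
  have f1: "W.fin_dim" using V.fin_dim_span_cols[OF P] unfolding V.col_space_def .
  have f2: "vectorspace.fin_dim class_ring (W.vs (V.col_space (P*C)))"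
    using V.fin_dim_span_cols[OF PC] unfolding V.col_space_def by simp
  have "vectorspace.dim class_ring (W.vs (V.col_space (P*C))) \<le> W.dim"
    by (rule W.subspace_dim[OF s3 f1 f2])
  then show ?thesis unfolding V.rank_def V.col_space_def by simp
qed
lemma sum_list_min_aux:
  "(\<Sum>n\<leftarrow>map fst [(n, e)\<leftarrow>xs . e = a]. min (1::nat) n) \<le> sum_list (map fst (filter (\<lambda>na. snd na = a) xs))"
  by (induction xs) auto

lemma kernel_dim_le_order0:
  fixes M :: "complex mat"
  assumes M: "M \<in> carrier_mat n n"
  shows "kernel_dim M \<le> order 0 (char_poly M)"
proof -
  obtain as where cp: "char_poly M = (\<Prod> a \<leftarrow> as. [:- a, 1:])" using char_poly_factorized[OF M] by blast
  obtain n_as where jnf: "jordan_nf M n_as" using jordan_nf_exists[OF M cp] by blast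
  have "char_matrix M 0 ^\<^sub>m 1 = M" using M by (auto simp: char_matrix_def)
  then have "kernel_dim M = dim_gen_eigenspace M 0 1" unfolding dim_gen_eigenspace_def by simp
  also have "\<dots> = (\<Sum>n\<leftarrow>map fst [(n, e)\<leftarrow>n_as . e = 0]. min 1 n)" by (rule dim_gen_eigenspace[OF jnf])
  also have "\<dots> \<le> sum_list (map fst (filter (\<lambda>na. snd na = 0) n_as))" by (rule sum_list_min_aux)
  also have "\<dots> = order 0 (char_poly M)" by (rule jordan_nf_order[OF jnf, symmetric])
  finally show ?thesis .
qed

lemma order_prod_linear:
  fixes es :: "'a::idom list"
  shows "order a (\<Prod>e\<leftarrow>es. [:- e, 1:]) = length (filter (\<lambda>e. e = a) es)"
proof (induction es)
  case Nil
  then show ?case by (simp add: order_1)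
next
  case (Cons b es)
  have nz: "(\<Prod>e\<leftarrow>es. [:- e, 1:]) \<noteq> 0" by (auto simp: prod_list_zero_iff)
  have nz2: "[:- b, 1:] * (\<Prod>e\<leftarrow>es. [:- e, 1:]) \<noteq> 0"
    using nz by (metis mult_eq_0_iff pCons_eq_0_iff one_neq_zero)
  have "order a (\<Prod>e\<leftarrow>b # es. [:- e, 1:]) = order a ([:- b, 1:] * (\<Prod>e\<leftarrow>es. [:- e, 1:]))" by simp
  also have "\<dots> = order a ([:- b, 1:]) + order a (\<Prod>e\<leftarrow>es. [:- e, 1:])"
    by (rule order_mult[OF nz2])
  also have "order a ([:- b, 1:]) = (if a = b then 1 else 0)"
    using order_linear_power[of a "- b" 1] by (auto simp: eq_neg_iff_add_eq_0 add_eq_0_iff)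
  finally show ?case using Cons by auto
qed

lemma nonzero_count:
  fixes P :: "complex mat"
  assumes bs: "bistochastic n d B" and i: "i < d" and op: "orth_proj n P"
    and cp: "char_poly (mat_adjoint (P * B i * (1\<^sub>m n - P)) * (P * B i * (1\<^sub>m n - P))) = (\<Prod>e\<leftarrow>es. [:- e, 1:])"
    and len: "length es = n"
  shows "length (filter (\<lambda>e. e \<noteq> 0) es) \<le> proj_dim n P"
proof -
  define X where "X = P * B i * (1\<^sub>m n - P)"
  have P: "P \<in> carrier_mat n n" using op unfolding orth_proj_def by auto
  have Bi: "B i \<in> carrier_mat n n" using bs i unfolding bistochastic_def by auto
  have IP: "1\<^sub>m n - P \<in> carrier_mat n n" using P by (intro minus_carrier_mat one_carrier_mat)
  have C: "B i * (1\<^sub>m n - P) \<in> carrier_mat n n" using Bi IP by simp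
  have X: "X \<in> carrier_mat n n" unfolding X_def using P Bi IP by simp
  have XA: "mat_adjoint X \<in> carrier_mat n n" using adj_carrier[OF X] .
  have M: "mat_adjoint X * X \<in> carrier_mat n n" using XA X by simp
  have kerEq: "mat_kernel (mat_adjoint X * X) = mat_kernel X"
  proof
    show "mat_kernel (mat_adjoint X * X) \<subseteq> mat_kernel X"
    proof
      fix v assume "v \<in> mat_kernel (mat_adjoint X * X)"
      then have v: "v \<in> carrier_vec n" and Mv: "(mat_adjoint X * X) *\<^sub>v v = 0\<^sub>v n"
        using mat_kernelD[OF M] by auto
      have "(X *\<^sub>v v) \<bullet>c (X *\<^sub>v v) = v \<bullet>c (mat_adjoint X *\<^sub>v (X *\<^sub>v v))"
        by (rule adjoint_sprod[OF X v], use X v in simp)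
      also have "\<dots> = v \<bullet>c 0\<^sub>v n" using assoc_mult_mat_vec[OF XA X v] Mv by simp
      also have "\<dots> = 0" using v by (simp add: scalar_prod_def)
      finally have "X *\<^sub>v v = 0\<^sub>v n" using conjugate_square_eq_0_vec[of "X *\<^sub>v v" n] X v by simp
      then show "v \<in> mat_kernel X" using X v by (intro mat_kernelI) auto
    qed
  next
    show "mat_kernel X \<subseteq> mat_kernel (mat_adjoint X * X)"
    proof
      fix v assume "v \<in> mat_kernel X"
      then have v: "v \<in> carrier_vec n" and Xv: "X *\<^sub>v v = 0\<^sub>v n" using mat_kernelD[OF X] by auto
      have "(mat_adjoint X * X) *\<^sub>v v = mat_adjoint X *\<^sub>v 0\<^sub>v n" using assoc_mult_mat_vec[OF XA X v] Xv by simp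
      also have "\<dots> = 0\<^sub>v n" using XA by (intro eq_vecI) (auto simp: scalar_prod_def)
      finally show "v \<in> mat_kernel (mat_adjoint X * X)" using M v by (intro mat_kernelI) auto
    qed
  qed
  have kd: "kernel_dim (mat_adjoint X * X) = kernel_dim X"
    unfolding kernel_dim_def using M X kerEq by simp
  have "kernel_dim X \<le> order 0 (char_poly (mat_adjoint X * X))"
    using kernel_dim_le_order0[OF M] kd by simp
  also have "\<dots> = length (filter (\<lambda>e. e = 0) es)" using cp unfolding X_def by (simp add: order_prod_linear)
  finally have k1: "kernel_dim X \<le> length (filter (\<lambda>e. e = 0) es)" .
  have k2: "kernel_dim X + vec_space.rank n X = n" by (rule rank_nullity_mat[OF X])
  have XPC: "X = P * (B i * (1\<^sub>m n - P))" unfolding X_def using assoc_mult_mat[OF P Bi IP] .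
  have k3: "vec_space.rank n X \<le> vec_space.rank n P" unfolding XPC by (rule rank_mult_le[OF P C])
  have "length (filter (\<lambda>e. e \<noteq> 0) es) + length (filter (\<lambda>e. e = 0) es) = n"
    using sum_length_filter_compl[of "\<lambda>e. e = 0" es] len by simp
  then show ?thesis using k1 k2 k3 unfolding proj_dim_def by linarith
qed

lemma sum_count_gen:
  fixes g :: "'a \<Rightarrow> real"
  assumes "finite X" "set es \<subseteq> X"
  shows "(\<Sum>z\<in>X. real (length (filter (\<lambda>e. e = z) es)) * g z) = sum_list (map g es)"
  using assms(2)
proof (induction es)
  case Nil
  then show ?case by simp
next
  case (Cons b es)
  have bX: "b \<in> X" using Cons by simp
  have "(\<Sum>z\<in>X. real (length (filter (\<lambda>e. e = z) (b # es))) * g z)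
      = (\<Sum>z\<in>X. (if b = z then g z else 0) + real (length (filter (\<lambda>e. e = z) es)) * g z)"
    by (intro sum.cong) (auto simp: algebra_simps)
  also have "\<dots> = (\<Sum>z\<in>X. (if b = z then g z else 0)) + (\<Sum>z\<in>X. real (length (filter (\<lambda>e. e = z) es)) * g z)"
    by (rule sum.distrib)
  also have "(\<Sum>z\<in>X. (if b = z then g z else 0)) = g b" using bX assms(1) by (simp add: sum.delta)
  finally show ?case using Cons by simp
qed

lemma sum_roots_list:
  fixes g :: "complex \<Rightarrow> real"
  shows "(\<Sum>z\<in>{z. poly (\<Prod>e\<leftarrow>es. [:- e, 1:]) z = 0}. real (order z (\<Prod>e\<leftarrow>es. [:- e, 1:])) * g z) = sum_list (map g es)"
proof -
  have R: "{z. poly (\<Prod>e\<leftarrow>es. [:- e, 1:]) z = 0} = set es"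
    by (auto simp: poly_prod_list prod_list_zero_iff)
  show ?thesis unfolding R order_prod_linear by (rule sum_count_gen) auto
qed

lemma tangent_powr:
  fixes r m x :: real
  assumes r: "r \<ge> 1" and m: "m > 0" and x: "x > 0"
  shows "m powr r + r * m powr (r - 1) * (x - m) \<le> x powr r"
proof -
  define g where "g y = y powr r - r * m powr (r - 1) * y" for y
  have D: "DERIV g y :> r * y powr (r - 1) - r * m powr (r - 1)" if "y > 0" for y
    unfolding g_def using that by (auto intro!: derivative_eq_intros)
  have "g m \<le> g x"
  proof (cases "m \<le> x")
    case True
    show ?thesis
    proof (rule DERIV_nonneg_imp_nondecreasing[OF True])
      fix y assume y: "m \<le> y" "y \<le> x"
      have "m powr (r - 1) \<le> y powr (r - 1)" using y m r by (intro powr_mono2) auto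
      then show "\<exists>d. DERIV g y :> d \<and> d \<ge> 0" using D[of y] y m r by (intro exI[of _ "r * y powr (r - 1) - r * m powr (r - 1)"]) auto
    qed
  next
    case False
    then have xm: "x \<le> m" by simp
    show ?thesis
    proof (rule DERIV_nonpos_imp_nonincreasing[OF xm])
      fix y assume y: "x \<le> y" "y \<le> m"
      have "y powr (r - 1) \<le> m powr (r - 1)" using y x r by (intro powr_mono2) auto
      then show "\<exists>d. DERIV g y :> d \<and> d \<le> 0" using D[of y] y x r by (intro exI[of _ "r * y powr (r - 1) - r * m powr (r - 1)"]) auto
    qed
  qed
  then have "m powr r - r * m powr (r - 1) * m \<le> x powr r - r * m powr (r - 1) * x" unfolding g_def .
  moreover have "m powr (r - 1) * m = m powr r" using m by (simp add: powr_mult_base mult.commute)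
  then have "r * m powr (r - 1) * m = r * m powr r" by (simp add: mult.assoc)
  moreover have "r * m powr (r - 1) * (x - m) = r * m powr (r - 1) * x - r * m powr (r - 1) * m"
    by (simp add: right_diff_distrib)
  ultimately show ?thesis by linarith
qed

lemma count_nz: "sum_list (map (\<lambda>x::real. if x = 0 then 1 else 0) xs) + sum_list (map (\<lambda>x::real. if x = 0 then 0 else 1) xs) = real (length xs)"
  by (induction xs) auto

lemma count_nz2: "sum_list (map (\<lambda>x::real. if x = 0 then 0 else 1) xs) = real (length (filter (\<lambda>x. x \<noteq> 0) xs))"
  by (induction xs) auto

lemma power_mean_list:
  fixes xs :: "real list" and r N :: real
  assumes nn: "\<And>x. x \<in> set xs \<Longrightarrow> x \<ge> 0" and r: "r \<ge> 1" and N: "N > 0"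
    and cnt: "real (length (filter (\<lambda>x. x \<noteq> 0) xs)) \<le> N"
  shows "(sum_list xs / N) powr r \<le> sum_list (map (\<lambda>x. x powr r) xs) / N"
proof -
  define m where "m = sum_list xs / N"
  have S0: "sum_list xs \<ge> 0" using nn by (simp add: sum_list_nonneg)
  have R0: "sum_list (map (\<lambda>x. x powr r) xs) \<ge> 0" by (rule sum_list_nonneg) auto
  show ?thesis
  proof (cases "m = 0")
    case True
    then show ?thesis using R0 N unfolding m_def by simp
  next
    case False
    then have m: "m > 0" using S0 N unfolding m_def by simp
    define h where "h x = (if x = 0 then 0 else m powr r + r * m powr (r - 1) * (x - m))" for x
    have mm: "m powr (r - 1) * m = m powr r" using m by (simp add: powr_mult_base mult.commute)
    have h_eq: "h x = (if x = 0 then 0 else 1) * ((1 - r) * m powr r) + (r * m powr (r - 1)) * x" for x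
      unfolding h_def using mm by (auto simp: algebra_simps)
    have hle: "h x \<le> x powr r" if "x \<in> set xs" for x
    proof (cases "x = 0")
      case True then show ?thesis unfolding h_def by simp
    next
      case False
      then have "x > 0" using nn[OF that] by simp
      then show ?thesis unfolding h_def using tangent_powr[OF r m] False by simp
    qed
    have "sum_list (map h xs) = sum_list (map (\<lambda>x::real. if x = 0 then 0 else 1) xs) * ((1 - r) * m powr r) + (r * m powr (r - 1)) * sum_list xs"
      unfolding h_eq by (simp add: sum_list_addf sum_list_const_mult sum_list_mult_const)
    also have "\<dots> = real (length (filter (\<lambda>x. x \<noteq> 0) xs)) * ((1 - r) * m powr r) + r * (m powr (r - 1) * m) * N"
      unfolding count_nz2 m_def using N by simp
    also have "\<dots> \<ge> N * ((1 - r) * m powr r) + r * (m powr r) * N"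
    proof -
      have "(1 - r) * m powr r \<le> 0" using r m by (simp add: mult_nonpos_nonneg)
      then have "real (length (filter (\<lambda>x. x \<noteq> 0) xs)) * ((1 - r) * m powr r) \<ge> N * ((1 - r) * m powr r)"
        using cnt by (simp add: mult_right_mono_neg)
      then show ?thesis unfolding mm by simp
    qed
    finally have "N * m powr r \<le> sum_list (map h xs)" by (simp add: algebra_simps)
    also have "\<dots> \<le> sum_list (map (\<lambda>x. x powr r) xs)" by (intro sum_list_mono hle)
    finally show ?thesis unfolding m_def[symmetric] using N by (simp add: field_simps)
  qed
qed

lemma sn_eq:
  assumes p: "p > 0" and cp: "char_poly (mat_adjoint X * X) = (\<Prod>e\<leftarrow>es. [:- e, 1:])"
  shows "schatten_norm p X powr p = sum_list (map (\<lambda>e. sqrt (Re e) powr p) es)"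
proof -
  define S where "S = sum_list (map (\<lambda>e. sqrt (Re e) powr p) es)"
  have S0: "S \<ge> 0" unfolding S_def by (rule sum_list_nonneg) auto
  have "schatten_norm p X = S powr (1 / p)"
    unfolding schatten_norm_def Let_def cp S_def using sum_roots_list[of es "\<lambda>e. sqrt (Re e) powr p"] by simp
  then have "schatten_norm p X powr p = S powr (1 / p * p)" by (simp add: powr_powr)
  also have "\<dots> = S" using p S0 by simp
  finally show ?thesis unfolding S_def .
qed

lemma exists_proj1:
  assumes n: "n \<ge> 2"
  shows "\<exists>P. orth_proj n P \<and> proj_dim n P = 1"
proof -
  define P :: "complex mat" where "P = mat n n (\<lambda>(i,j). if i = 0 \<and> j = 0 then 1 else 0)"
  have Pc: "P \<in> carrier_mat n n" unfolding P_def by simp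
  have PP: "P * P = P"
  proof (rule eq_matI)
    fix i j assume i: "i < dim_row P" and j: "j < dim_col P"
    have "(P * P) $$ (i, j) = (\<Sum>k<n. (if i = 0 \<and> k = 0 then 1 else 0) * (if k = 0 \<and> j = 0 then 1 else 0))"
      using i j unfolding P_def by (simp add: scalar_prod_def row_def col_def lessThan_atLeast0)
    also have "\<dots> = (\<Sum>k<n. if k = 0 then (if i = 0 \<and> j = 0 then 1 else 0) else 0)"
      by (intro sum.cong) auto
    also have "\<dots> = P $$ (i, j)" using i j n unfolding P_def by simp
    finally show "(P * P) $$ (i, j) = P $$ (i, j)" .
  qed (auto simp: P_def)
  have PA: "mat_adjoint P = P"
  proof (rule eq_matI)
    fix i j assume ij: "i < dim_row P" "j < dim_col P"
    then have "mat_adjoint P $$ (i,j) = cnj (P $$ (j,i))" using Pc by (intro adj_entry[OF Pc]) auto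
    then show "mat_adjoint P $$ (i,j) = P $$ (i,j)" using ij Pc by (auto simp: P_def)
  qed (use adj_carrier[OF Pc] Pc in auto)
  interpret V: vec_space "TYPE(complex)" n .
  have r1: "V.rank P \<le> 1"
    by (rule V.rank_le_1_product_entries[OF Pc, of "\<lambda>r. if r = 0 then 1 else 0" "\<lambda>c. if c = 0 then 1 else 0"])
      (auto simp: P_def)
  have u: "unit_vec n 0 \<in> set (cols P)"
  proof -
    have "col P 0 = unit_vec n 0" unfolding P_def using n by (intro eq_vecI) (auto simp: unit_vec_def)
    moreover have "col P 0 \<in> set (cols P)" using n Pc by (simp add: cols_def)
    ultimately show ?thesis by simp
  qed
  have li: "V.lin_indpt {unit_vec n 0}"
  proof (rule V.subset_li_is_li)
    show "V.lin_indpt (set (unit_vecs n))" using V.unit_vecs_basis unfolding V.basis_def by auto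
    show "{unit_vec n 0} \<subseteq> set (unit_vecs n)" using n by (simp add: unit_vecs_def)
  qed
  have r2: "V.rank P \<ge> 1" using V.rank_ge_card_indpt[OF Pc, of "{unit_vec n 0}"] u li by simp
  show ?thesis using Pc PP PA r1 r2 unfolding orth_proj_def proj_dim_def by (intro exI[of _ P]) auto
qed

definition adm :: "nat \<Rightarrow> complex mat \<Rightarrow> bool" where
  "adm n P \<longleftrightarrow> orth_proj n P \<and> proj_dim n P \<noteq> 0 \<and> 2 * proj_dim n P \<le> n"

definition Fv :: "real \<Rightarrow> nat \<Rightarrow> nat \<Rightarrow> (nat \<Rightarrow> complex mat) \<Rightarrow> complex mat \<Rightarrow> real" where
  "Fv p n d B P = (\<Sum>i<d. schatten_norm p (P * B i * (1\<^sub>m n - P)) powr p) / (real d * real (proj_dim n P))"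

lemma ee_eq: "edge_expansion p n d B = Inf (Fv p n d B ` {P. adm n P})"
  unfolding edge_expansion_def Fv_def adm_def by (rule arg_cong[of _ _ Inf]) auto

lemma Fv_nonneg: "Fv p n d B P \<ge> 0"
  unfolding Fv_def by (intro divide_nonneg_nonneg sum_nonneg) auto

lemma pt1:
  fixes t D p q :: real
  assumes t: "0 \<le> t" "t \<le> sqrt D" and D: "D \<ge> 0" and q: "1 \<le> q" "q \<le> p"
  shows "t powr p \<le> D powr ((p - q) / 2) * t powr q"
proof (cases "t = 0")
  case True then show ?thesis by simp
next
  case False
  then have t0: "t > 0" using t by simp
  have "t powr p = t powr (p - q) * t powr q" by (simp add: powr_add[symmetric])
  also have "t powr (p - q) \<le> (sqrt D) powr (p - q)" using t q by (intro powr_mono2) auto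
  also have "(sqrt D) powr (p - q) = D powr ((p - q) / 2)"
    using D by (simp add: powr_half_sqrt[symmetric] powr_powr)
  finally show ?thesis using t0 by (simp add: mult_right_mono)
qed

lemma sum_list_concat': "sum_list (concat xss) = sum_list (map sum_list (xss :: real list list))"
  by (induction xss) auto

lemma sum_upt_list: "sum_list (map f [0..<d]) = (\<Sum>i<d. f i)"
  by (simp add: interv_sum_list_conv_sum_set_nat atLeast0LessThan)

lemma filter_len_mono: "(\<And>x. P x \<Longrightarrow> Q x) \<Longrightarrow> length (filter P xs) \<le> length (filter Q xs)"
  by (induction xs) auto

lemma per_P:
  assumes bs: "bistochastic n d B" and d: "d \<ge> 1" and q: "1 \<le> q" and qp: "q \<le> p" and ad: "adm n P"
  shows "Fv p n d B P \<le> real d powr ((p - q) / 2) * Fv q n d B P \<and> Fv q n d B P powr (p / q) \<le> Fv p n d B P"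
proof -
  define k where "k = proj_dim n P"
  have op: "orth_proj n P" and k1: "k \<ge> 1" using ad unfolding adm_def k_def by auto
  have P: "P \<in> carrier_mat n n" using op unfolding orth_proj_def by auto
  define X where "X i = P * B i * (1\<^sub>m n - P)" for i
  have Xc: "\<And>i. i < d \<Longrightarrow> mat_adjoint (X i) * X i \<in> carrier_mat n n"
  proof -
    fix i assume i: "i < d"
    have Bi: "B i \<in> carrier_mat n n" using bs i unfolding bistochastic_def by auto
    have IP: "1\<^sub>m n - P \<in> carrier_mat n n" using P by (intro minus_carrier_mat one_carrier_mat)
    have "X i \<in> carrier_mat n n" unfolding X_def using P Bi IP by simp
    then show "mat_adjoint (X i) * X i \<in> carrier_mat n n" using adj_carrier by (meson mult_carrier_mat)
  qed
  have "\<forall>i\<in>{..<d}. \<exists>es. char_poly (mat_adjoint (X i) * X i) = (\<Prod>e\<leftarrow>es. [:- e, 1:]) \<and> length es = n"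
    using char_poly_factorized Xc by blast
  then obtain es where es: "\<And>i. i < d \<Longrightarrow> char_poly (mat_adjoint (X i) * X i) = (\<Prod>e\<leftarrow>es i. [:- e, 1:]) \<and> length (es i) = n"
    by (metis bchoice lessThan_iff)
  have ev: "0 \<le> Re e \<and> Re e \<le> real d" if i: "i < d" and e: "e \<in> set (es i)" for i e
  proof -
    have "poly (char_poly (mat_adjoint (X i) * X i)) e = 0"
      using es[OF i] e by (auto simp: poly_prod_list prod_list_zero_iff)
    then show ?thesis using eig_bound[OF bs i op] unfolding X_def by blast
  qed
  have nz: "length (filter (\<lambda>e. e \<noteq> 0) (es i)) \<le> k" if i: "i < d" for i
    using nonzero_count[OF bs i op] es[OF i] unfolding X_def k_def by blast
  have sn: "schatten_norm s (X i) powr s = sum_list (map (\<lambda>e. sqrt (Re e) powr s) (es i))" if i: "i < d" and s: "s > 0" for i s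
    by (rule sn_eq[OF s]) (use es[OF i] in blast)
  define S where "S s = (\<Sum>i<d. sum_list (map (\<lambda>e. sqrt (Re e) powr s) (es i)))" for s
  define N where "N = real d * real k"
  have N: "N > 0" unfolding N_def using d k1 by simp
  have F: "Fv s n d B P = S s / N" if "s > 0" for s
    unfolding Fv_def S_def N_def k_def X_def[symmetric] using sn that by simp
  have p0: "p > 0" and q0: "q > 0" using q qp by auto
  have part1: "S p \<le> real d powr ((p - q) / 2) * S q"
  proof -
    have "S p \<le> (\<Sum>i<d. sum_list (map (\<lambda>e. real d powr ((p - q) / 2) * sqrt (Re e) powr q) (es i)))"
      unfolding S_def
    proof (intro sum_mono sum_list_mono)
      fix i e assume i: "i \<in> {..<d}" and e: "e \<in> set (es i)"
      show "sqrt (Re e) powr p \<le> real d powr ((p - q) / 2) * sqrt (Re e) powr q"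
        using ev[of i e] i e q qp by (intro pt1) auto
    qed
    also have "\<dots> = real d powr ((p - q) / 2) * S q"
      unfolding S_def by (simp add: sum_distrib_left sum_list_const_mult)
    finally show ?thesis .
  qed
  define xs where "xs = concat (map (\<lambda>i. map (\<lambda>e. sqrt (Re e) powr q) (es i)) [0..<d])"
  have sx: "sum_list xs = S q"
    unfolding xs_def S_def sum_list_concat' map_map by (simp add: comp_def sum_upt_list)
  have pw: "(t powr q) powr (p / q) = t powr p" for t :: real
    using q0 by (simp add: powr_powr)
  have sxp: "sum_list (map (\<lambda>x. x powr (p / q)) xs) = S p"
    unfolding xs_def S_def map_concat map_map sum_list_concat' by (simp add: comp_def pw sum_upt_list)
  have cnt: "real (length (filter (\<lambda>x. x \<noteq> 0) xs)) \<le> N"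
  proof -
    have "length (filter (\<lambda>x. x \<noteq> 0) xs) = (\<Sum>i<d. length (filter (\<lambda>x. x \<noteq> 0) (map (\<lambda>e. sqrt (Re e) powr q) (es i))))"
      unfolding xs_def filter_concat length_concat map_map
      by (simp add: comp_def sum_upt_list)
    also have "\<dots> \<le> (\<Sum>i<d. k)"
    proof (rule sum_mono)
      fix i assume i: "i \<in> {..<d}"
      have "length (filter (\<lambda>x. x \<noteq> 0) (map (\<lambda>e. sqrt (Re e) powr q) (es i)))
          = length (filter (\<lambda>e. sqrt (Re e) powr q \<noteq> 0) (es i))" by (simp only: filter_map length_map o_def)
      also have "\<dots> \<le> length (filter (\<lambda>e. e \<noteq> 0) (es i))" by (rule filter_len_mono) auto
      also have "\<dots> \<le> k" using nz i by simp
      finally show "length (filter (\<lambda>x. x \<noteq> 0) (map (\<lambda>e. sqrt (Re e) powr q) (es i))) \<le> k" .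
    qed
    also have "\<dots> = d * k" by simp
    finally show ?thesis unfolding N_def by (metis of_nat_le_iff of_nat_mult)
  qed
  have xs0: "x \<ge> 0" if "x \<in> set xs" for x using that unfolding xs_def by auto
  have part2: "(S q / N) powr (p / q) \<le> S p / N"
    using power_mean_list[of xs "p / q" N, OF xs0 _ N cnt] q qp sx sxp by simp
  show ?thesis
    unfolding F[OF p0] F[OF q0] using part1 part2 N by (simp add: divide_right_mono)
qed

lemma partA:
  assumes n: "2 \<le> n" and d: "1 \<le> d" and bs: "bistochastic n d B" and q: "1 \<le> q" and qp: "q \<le> p"
  shows "edge_expansion p n d B \<le> real d powr ((p - q) / 2) * edge_expansion q n d B \<and>
         edge_expansion p n d B \<ge> (edge_expansion q n d B) powr (p / q)"
proof -
  define A where "A = {P. adm n P}"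
  obtain P0 where "orth_proj n P0" "proj_dim n P0 = 1" using exists_proj1[OF n] by blast
  then have P0: "P0 \<in> A" unfolding A_def adm_def using n by auto
  have bdd: "bdd_below (Fv s n d B ` A)" for s by (rule bdd_belowI[of _ 0]) (auto intro: Fv_nonneg)
  have ne: "Fv s n d B ` A \<noteq> {}" for s using P0 by auto
  have low: "Inf (Fv s n d B ` A) \<le> Fv s n d B P" if "P \<in> A" for s P
    by (rule cInf_lower[OF _ bdd]) (use that in auto)
  have nn: "Inf (Fv s n d B ` A) \<ge> 0" for s
    by (rule cInf_greatest[OF ne]) (auto intro: Fv_nonneg)
  define c where "c = real d powr ((p - q) / 2)"
  have c0: "c > 0" unfolding c_def using d by simp
  have pp: "\<And>P. P \<in> A \<Longrightarrow> Fv p n d B P \<le> c * Fv q n d B P \<and> Fv q n d B P powr (p / q) \<le> Fv p n d B P"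
    unfolding A_def c_def using per_P[OF bs d q qp] by blast
  have 1: "Inf (Fv p n d B ` A) / c \<le> Inf (Fv q n d B ` A)"
  proof (rule cInf_greatest[OF ne])
    fix x assume "x \<in> Fv q n d B ` A"
    then obtain P where P: "P \<in> A" and x: "x = Fv q n d B P" by auto
    have "Inf (Fv p n d B ` A) \<le> c * x" using low[OF P, of p] pp[OF P] unfolding x by linarith
    then show "Inf (Fv p n d B ` A) / c \<le> x" using c0 by (simp add: divide_le_eq mult.commute)
  qed
  have 2: "Inf (Fv q n d B ` A) powr (p / q) \<le> Inf (Fv p n d B ` A)"
  proof (rule cInf_greatest[OF ne])
    fix x assume "x \<in> Fv p n d B ` A"
    then obtain P where P: "P \<in> A" and x: "x = Fv p n d B P" by auto
    have "Inf (Fv q n d B ` A) powr (p / q) \<le> Fv q n d B P powr (p / q)"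
      using low[OF P, of q] nn[of q] q qp by (intro powr_mono2) auto
    then show "Inf (Fv q n d B ` A) powr (p / q) \<le> x" using pp[OF P] x by linarith
  qed
  show ?thesis unfolding ee_eq A_def[symmetric] using 1 2 c0 unfolding c_def by (simp add: divide_le_eq mult.commute)
qed

lemma ee_nonneg: "2 \<le> n \<Longrightarrow> edge_expansion s n d B \<ge> 0"
proof -
  assume n: "2 \<le> n"
  obtain P0 where "orth_proj n P0" "proj_dim n P0 = 1" using exists_proj1[OF n] by blast
  then have ne: "Fv s n d B ` {P. adm n P} \<noteq> {}" unfolding adm_def using n by auto
  show ?thesis unfolding ee_eq by (rule cInf_greatest[OF ne]) (auto intro: Fv_nonneg)
qed

lemma partB_dir:
  fixes ns :: "nat \<Rightarrow> nat" and Bs :: "nat \<Rightarrow> nat \<Rightarrow> complex mat"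
  assumes d: "1 \<le> d" and hyp: "\<forall>m. 2 \<le> ns m \<and> bistochastic (ns m) d (Bs m)" and t: "1 \<le> t" and ts: "t \<le> s"
  shows "(INF m. edge_expansion t (ns m) d (Bs m)) > 0 \<longleftrightarrow> (INF m. edge_expansion s (ns m) d (Bs m)) > 0"
proof -
  define ht where "ht m = edge_expansion t (ns m) d (Bs m)" for m
  define hs where "hs m = edge_expansion s (ns m) d (Bs m)" for m
  have A: "hs m \<le> real d powr ((s - t) / 2) * ht m \<and> hs m \<ge> ht m powr (s / t)" for m
    unfolding hs_def ht_def using partA[of "ns m" d "Bs m" t s] hyp d t ts by blast
  have nt: "ht m \<ge> 0" and ns0: "hs m \<ge> 0" for m unfolding ht_def hs_def using hyp ee_nonneg by auto
  have bt: "bdd_below (range ht)" and bs: "bdd_below (range hs)"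
    using nt ns0 by (auto intro!: bdd_belowI[of _ 0])
  define c where "c = real d powr ((s - t) / 2)"
  have c0: "c > 0" unfolding c_def using d by simp
  show ?thesis unfolding ht_def[symmetric] hs_def[symmetric]
  proof
    assume L: "(INF m. ht m) > 0"
    have "(INF m. ht m) powr (s / t) \<le> (INF m. hs m)"
    proof (rule cINF_greatest)
      fix m
      have "(INF m. ht m) powr (s / t) \<le> ht m powr (s / t)"
        using cINF_lower[OF bt, of m] L t ts by (intro powr_mono2) auto
      then show "(INF m. ht m) powr (s / t) \<le> hs m" using A[of m] by linarith
    qed simp
    moreover have "(INF m. ht m) powr (s / t) > 0" using L by simp
    ultimately show "(INF m. hs m) > 0" by linarith
  next
    assume L: "(INF m. hs m) > 0"
    have "(INF m. hs m) / c \<le> (INF m. ht m)"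
    proof (rule cINF_greatest)
      fix m
      have "(INF m. hs m) \<le> hs m" by (rule cINF_lower[OF bs]) simp
      then have "(INF m. hs m) \<le> c * ht m" using A[of m] unfolding c_def by linarith
      then show "(INF m. hs m) / c \<le> ht m" using c0 by (simp add: divide_le_eq mult.commute)
    qed simp
    moreover have "(INF m. hs m) / c > 0" using L c0 by simp
    ultimately show "(INF m. ht m) > 0" by linarith
  qed
qed

theorem theorem1:
  shows
  "(\<forall>(n::nat) (d::nat) B (p::real) (q::real).
      2 \<le> n \<longrightarrow> 1 \<le> d \<longrightarrow> bistochastic n d B \<longrightarrow> 1 \<le> q \<longrightarrow> q \<le> p \<longrightarrow>
        edge_expansion p n d B \<le> real d powr ((p - q) / 2) * edge_expansion q n d B \<and>
        edge_expansion p n d B \<ge> (edge_expansion q n d B) powr (p / q))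
   \<and>
   (\<forall>(p::real) (q::real) (d::nat) (ns::nat \<Rightarrow> nat) (Bs::nat \<Rightarrow> nat \<Rightarrow> complex mat).
      1 \<le> p \<longrightarrow> 1 \<le> q \<longrightarrow> 1 \<le> d \<longrightarrow>
      (\<forall>m. 2 \<le> ns m \<and> bistochastic (ns m) d (Bs m)) \<longrightarrow>
        ((INF m. edge_expansion p (ns m) d (Bs m)) > 0 \<longleftrightarrow>
         (INF m. edge_expansion q (ns m) d (Bs m)) > 0))"
proof (intro conjI allI impI)
  fix n d :: nat and B and p q :: real
  assume "2 \<le> n" "1 \<le> d" "bistochastic n d B" "1 \<le> q" "q \<le> p"
  then show "edge_expansion p n d B \<le> real d powr ((p - q) / 2) * edge_expansion q n d B"
    "edge_expansion p n d B \<ge> (edge_expansion q n d B) powr (p / q)" using partA by blast+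
next
  fix p q :: real and d :: nat and ns :: "nat \<Rightarrow> nat" and Bs :: "nat \<Rightarrow> nat \<Rightarrow> complex mat"
  assume p: "1 \<le> p" and q: "1 \<le> q" and d: "1 \<le> d" and h: "\<forall>m. 2 \<le> ns m \<and> bistochastic (ns m) d (Bs m)"
  show "(INF m. edge_expansion p (ns m) d (Bs m)) > 0 \<longleftrightarrow> (INF m. edge_expansion q (ns m) d (Bs m)) > 0"
  proof (cases "q \<le> p")
    case True
    then show ?thesis using partB_dir[OF d h q True] by blast
  next
    case False
    then show ?thesis using partB_dir[OF d h p, of q] by linarith
  qed
qed

end
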